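(* For every positive integer $k$, there exists a digraph $G \in \mathcal{C}_3$ such that $\vec{\chi}(G) \geq k$.
   Context: All digraphs are finite and simple: no loops, no multiple arcs, and for two distinct vertices $u,v$ at most one of the arcs $uv$, $vu$ is present. A $k$-dicolouring of a digraph $D$ is a partition of $V(D)$ into $k$ sets $V_1,\dots,V_k$ (some possibly empty) such that each induced subdigraph $D[V_i]$ is acyclic (contains no directed cycle). The dichromatic number $\vec{\chi}(D)$ is the smallest $k$ such that $D$ admits a $k$-dicolouring. $TT_3$ denotes the transitive tournament on 3 vertices (a triangle oriented acyclically); a directed triangle is a directed cycle of length 3. $\mathcal{C}_3$ is the class of digraphs that contain no $TT_3$ as a subdigraph and contain no induced directed cycle of length at least $4$ (so every induced directed cycle is a directed triangle). *)

theory Defs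
  imports Main
begin

definition digraph :: "'a set \<Rightarrow> ('a \<times> 'a) set \<Rightarrow> bool" where
  "digraph V A \<longleftrightarrow> finite V \<and> A \<subseteq> V \<times> V \<and> (\<forall>v. (v, v) \<notin> A)
     \<and> (\<forall>u v. (u, v) \<in> A \<longrightarrow> (v, u) \<notin> A)"

definition induced_arcs :: "('a \<times> 'a) set \<Rightarrow> 'a set \<Rightarrow> ('a \<times> 'a) set" where
  "induced_arcs A S = A \<inter> (S \<times> S)"

definition dicolouring :: "'a set \<Rightarrow> ('a \<times> 'a) set \<Rightarrow> nat \<Rightarrow> ('a \<Rightarrow> nat) \<Rightarrow> bool" where
  "dicolouring V A k c \<longleftrightarrow> (\<forall>v\<in>V. c v < k)
     \<and> (\<forall>i<k. acyclic (induced_arcs A {v\<in>V. c v = i}))"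

definition dichromatic_number :: "'a set \<Rightarrow> ('a \<times> 'a) set \<Rightarrow> nat" where
  "dichromatic_number V A = (LEAST k. \<exists>c. dicolouring V A k c)"

definition has_TT3 :: "('a \<times> 'a) set \<Rightarrow> bool" where
  "has_TT3 A \<longleftrightarrow> (\<exists>a b c. a \<noteq> b \<and> b \<noteq> c \<and> a \<noteq> c
      \<and> (a, b) \<in> A \<and> (b, c) \<in> A \<and> (a, c) \<in> A)"

definition dir_cycle :: "('a \<times> 'a) set \<Rightarrow> 'a list \<Rightarrow> bool" where
  "dir_cycle A vs \<longleftrightarrow> length vs \<ge> 2 \<and> distinct vs
     \<and> (\<forall>i < length vs. (vs ! i, vs ! ((i + 1) mod length vs)) \<in> A)"

definition induced_dir_cycle :: "'a set \<Rightarrow> ('a \<times> 'a) set \<Rightarrow> 'a list \<Rightarrow> bool" where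
  "induced_dir_cycle V A vs \<longleftrightarrow> set vs \<subseteq> V \<and> dir_cycle A vs
     \<and> induced_arcs A (set vs) = {(vs ! i, vs ! ((i + 1) mod length vs)) | i. i < length vs}"

definition in_C3 :: "'a set \<Rightarrow> ('a \<times> 'a) set \<Rightarrow> bool" where
  "in_C3 V A \<longleftrightarrow> \<not> has_TT3 A \<and> (\<forall>vs. induced_dir_cycle V A vs \<longrightarrow> length vs < 4)"

end

theory Submission imports Defs "HOL-Library.Ramsey" "HOL-Library.Nat_Bijection" begin

definition e3 :: "nat \<Rightarrow> nat \<Rightarrow> nat \<Rightarrow> nat" where
  "e3 a b c = prod_encode (a, prod_encode (b, c))"
definition d1 :: "nat \<Rightarrow> nat" where "d1 u = fst (prod_decode u)"
definition d2 :: "nat \<Rightarrow> nat" where "d2 u = fst (prod_decode (snd (prod_decode u)))"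
definition d3 :: "nat \<Rightarrow> nat" where "d3 u = snd (prod_decode (snd (prod_decode u)))"

lemma d_e3 [simp]: "d1 (e3 a b c) = a" "d2 (e3 a b c) = b" "d3 (e3 a b c) = c"
  by (simp_all add: e3_def d1_def d2_def d3_def)

lemma e3_d: "e3 (d1 u) (d2 u) (d3 u) = u"
  by (simp add: e3_def d1_def d2_def d3_def)

definition VV :: "nat \<Rightarrow> nat set" where
  "VV N = {u. d1 u < d2 u \<and> d2 u < d3 u \<and> d3 u < N}"
definition AA :: "nat \<Rightarrow> (nat \<times> nat) set" where
  "AA N = {(u, v). u \<in> VV N \<and> v \<in> VV N \<and> ((d1 v = d2 u \<and> d2 v = d3 u) \<or> d3 v = d1 u)}"

lemma finite_VV: "finite (VV N)"
proof -
  have "VV N \<subseteq> (\<lambda>(a, b, c). e3 a b c) ` ({..<N} \<times> {..<N} \<times> {..<N})"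
  proof
    fix u assume "u \<in> VV N"
    then have "(d1 u, d2 u, d3 u) \<in> {..<N} \<times> {..<N} \<times> {..<N}" by (auto simp: VV_def)
    then show "u \<in> (\<lambda>(a, b, c). e3 a b c) ` ({..<N} \<times> {..<N} \<times> {..<N})"
      by (metis (no_types, lifting) case_prod_conv e3_d image_eqI)
  qed
  then show ?thesis by (rule finite_subset) auto
qed

lemma digraph_VV: "digraph (VV N) (AA N)"
  unfolding digraph_def using finite_VV by (auto simp: AA_def VV_def)

lemma noTT3: "\<not> has_TT3 (AA N)"
  unfolding has_TT3_def AA_def VV_def by auto

lemma mod_lemma:
  assumes "(j::nat) < m" "4 \<le> m" "(j + 1) mod m = (j + m - 2) mod m"
  shows False
proof (cases "j + 1 < m")
  case True
  then have l: "(j + 1) mod m = j + 1" by simp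
  show False
  proof (cases "j \<ge> 2")
    case True
    then have "(j + m - 2) mod m = j - 2"
      using assms by (metis add.commute add_diff_assoc2 le_add1 le_add_diff_inverse2 mod_add_self2 mod_less less_imp_diff_less)
    then show False using l assms True by simp
  next
    case False
    then have "(j + m - 2) mod m = j + m - 2" using assms by simp
    then show False using l assms False by simp
  qed
next
  case False
  then have "j + 1 = m" using assms by simp
  then have l: "(j + 1) mod m = 0" by simp
  have "(j + m - 2) mod m = m - 3"
  proof -
    have e: "j + m - 2 = (m - 3) + m" using \<open>j + 1 = m\<close> assms by simp
    show ?thesis unfolding e mod_add_self2 using assms by simp
  qed
  then show False using l assms by simp
qed

lemma noC4:
  assumes "induced_dir_cycle (VV N) (AA N) vs"
  shows "length vs < 4"
proof (rule ccontr)
  assume "\<not> length vs < 4"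
  define m where "m = length vs"
  have m4: "4 \<le> m" using \<open>\<not> length vs < 4\<close> m_def by simp
  have dc: "dir_cycle (AA N) vs" and ind: "induced_arcs (AA N) (set vs) = {(vs ! i, vs ! ((i + 1) mod length vs)) | i. i < length vs}"
    using assms by (auto simp: induced_dir_cycle_def)
  have dist: "distinct vs" and arcs: "\<And>i. i < m \<Longrightarrow> (vs ! i, vs ! ((i + 1) mod m)) \<in> AA N"
    using dc by (auto simp: dir_cycle_def m_def)
  have "finite (d1 ` set vs)" "d1 ` set vs \<noteq> {}" using m4 m_def by auto
  then have "Max (d1 ` set vs) \<in> d1 ` set vs" by (rule Max_in)
  then obtain X where Xin: "X \<in> set vs" and Xmax: "d1 X = Max (d1 ` set vs)" by auto
  then obtain j where j: "j < m" "vs ! j = X" using m_def by (metis in_set_conv_nth)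
  have maxp: "\<And>i. i < m \<Longrightarrow> d1 (vs ! i) \<le> d1 X"
    using Xmax m_def by (metis Max_ge \<open>finite (d1 ` set vs)\<close> image_eqI nth_mem)
  define p where "p = (j + m - 1) mod m"
  define q where "q = (j + m - 2) mod m"
  have p: "p < m" "(p + 1) mod m = j" using j m4 by (auto simp: p_def mod_Suc_eq)
  have pq: "q < m" "(q + 1) mod m = p" using j m4 by (auto simp: p_def q_def mod_Suc_eq Suc_diff_Suc numeral_2_eq_2)
  have WX: "(vs ! p, X) \<in> AA N" using arcs[OF p(1)] p j by simp
  have VW: "(vs ! q, vs ! p) \<in> AA N" using arcs[OF pq(1)] pq by simp
  have mp: "d1 (vs ! p) \<le> d1 X" "d1 (vs ! q) \<le> d1 X" using maxp p pq by auto
  have F1: "d1 X = d2 (vs ! p) \<and> d2 X = d3 (vs ! p)"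
    using WX mp by (auto simp: AA_def VV_def)
  have F2: "d1 (vs ! p) = d2 (vs ! q) \<and> d2 (vs ! p) = d3 (vs ! q)"
    using VW mp F1 WX by (auto simp: AA_def VV_def)
  have XV: "(X, vs ! q) \<in> AA N" using WX VW F1 F2 by (auto simp: AA_def)
  have "vs ! q \<in> set vs" using pq m_def by simp
  then have "(X, vs ! q) \<in> induced_arcs (AA N) (set vs)" using XV Xin by (simp add: induced_arcs_def)
  then obtain i where i: "i < m" "X = vs ! i" "vs ! q = vs ! ((i + 1) mod m)"
    using ind m_def by auto
  have "i = j" using i j dist m_def by (metis nth_eq_iff_index_eq)
  then have "q = (j + 1) mod m"
    using i dist pq m_def m4 by (metis mod_less_divisor nth_eq_iff_index_eq not_numeral_le_zero gr_zeroI)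
  then show False using mod_lemma[OF j(1) m4] q_def by simp
qed

lemma inC3: "in_C3 (VV N) (AA N)"
  using noTT3 noC4 by (auto simp: in_C3_def)

lemma mono_window:
  assumes "partn_lst {..<N} (replicate k 5) 3" "dicolouring (VV N) (AA N) j c" "j < k"
  shows False
proof -
  define f where "f X = c (e3 (Min X) (Min (X - {Min X})) (Max X))" for X :: "nat set"
  have fe: "f {u, v, x} = c (e3 u v x)" if "u < v" "v < x" for u v x
  proof -
    have "Min {u, v, x} = u \<and> Max {u, v, x} = x \<and> Min ({u, v, x} - {u}) = v" using that by auto
    then show ?thesis by (simp add: f_def)
  qed
  have cj: "\<And>v. v \<in> VV N \<Longrightarrow> c v < j" using assms(2) by (auto simp: dicolouring_def)
  have ev: "e3 u v x \<in> VV N" if "u < v" "v < x" "x < N" for u v x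
    using that by (simp add: VV_def)
  have "f \<in> nsets {..<N} 3 \<rightarrow> {..<length (replicate k (5::nat))}"
  proof
    fix X assume "X \<in> nsets {..<N} 3"
    then obtain u v x where "X = {u, v, x}" "u < v" "v < x" "x < N"
      unfolding ordered_nsets_3_eq by auto
    then show "f X \<in> {..<length (replicate k (5::nat))}"
      using fe cj[OF ev] assms(3) by fastforce
  qed
  from partn_lstE[OF assms(1) this refl] obtain i H where
    iH: "i < length (replicate k (5::nat))" "H \<in> nsets {..<N} (replicate k 5 ! i)" "f ` nsets H 3 \<subseteq> {i}"
    by blast
  have "H \<in> nsets {..<N} 5" using iH by simp
  then obtain a b cc d e where H: "H = {a, b, cc, d, e}" "a < b" "b < cc" "cc < d" "d < e" "e < N"
    unfolding ordered_nsets_5_eq by auto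
  have in3: "{x, y, z} \<in> nsets H 3" if "x \<in> H" "y \<in> H" "z \<in> H" "x < y" "y < z" for x y z
    using that by (auto simp: nsets_def card_insert_if)
  have c1: "c (e3 a b cc) = i" using iH(3) in3[of a b cc] H fe[of a b cc] by auto
  have c2: "c (e3 b cc d) = i" using iH(3) in3[of b cc d] H fe[of b cc d] by auto
  have c3: "c (e3 cc d e) = i" using iH(3) in3[of cc d e] H fe[of cc d e] by auto
  define S where "S = {v \<in> VV N. c v = i}"
  have P: "e3 a b cc \<in> S" "e3 b cc d \<in> S" "e3 cc d e \<in> S"
    using c1 c2 c3 ev H by (auto simp: S_def)
  have ij: "i < j" using c1 cj ev H by force
  have ac: "acyclic (induced_arcs (AA N) S)" using assms(2) ij by (auto simp: dicolouring_def S_def)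
  have "(e3 a b cc, e3 b cc d) \<in> induced_arcs (AA N) S"
       "(e3 b cc d, e3 cc d e) \<in> induced_arcs (AA N) S"
       "(e3 cc d e, e3 a b cc) \<in> induced_arcs (AA N) S"
    using P by (auto simp: induced_arcs_def AA_def S_def)
  then have "(e3 a b cc, e3 a b cc) \<in> (induced_arcs (AA N) S)\<^sup>+"
    by (meson trancl.r_into_trancl trancl_into_trancl)
  then show False using ac by (simp add: acyclic_def)
qed

lemma some_colouring: "\<exists>k c. dicolouring (VV N) (AA N) k c"
proof -
  obtain b where b: "\<forall>v \<in> VV N. v < b" using finite_VV finite_nat_bounded by (meson lessThan_iff subsetD)
  have "induced_arcs (AA N) {v \<in> VV N. v = i} = {}" for i
    by (auto simp: induced_arcs_def AA_def VV_def)
  then have "dicolouring (VV N) (AA N) b id" using b by (simp add: dicolouring_def acyclic_def)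
  then show ?thesis by blast
qed

theorem theorem1:
  fixes k :: nat
  assumes "k \<ge> 1"
  shows "\<exists>(V :: nat set) A. digraph V A \<and> in_C3 V A \<and> dichromatic_number V A \<ge> k"
proof -
  obtain N :: nat where N: "partn_lst {..<N} (replicate k 5) 3" using ramsey_full by blast
  have "dichromatic_number (VV N) (AA N) \<ge> k"
  proof (rule ccontr)
    assume "\<not> k \<le> dichromatic_number (VV N) (AA N)"
    moreover have "\<exists>c. dicolouring (VV N) (AA N) (dichromatic_number (VV N) (AA N)) c"
      unfolding dichromatic_number_def using some_colouring by (rule LeastI_ex)
    ultimately show False using mono_window[OF N] by (meson not_le)
  qed
  then show ?thesis using digraph_VV inC3 by blast
qed

end
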